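(* Let $\varepsilon\in\{0,-1\}$, $\delta\in\{-1,0,1\}$ and $\phi_1,\phi_2,\phi_3\in\mathring I_\delta$. Then $$\mathcal{M}_{\varepsilon,\delta}(\phi_1,\phi_2,\phi_3)=\{(r_1,r_2,r_3)\in(J_{\varepsilon\delta})^3:\ (r_i,r_j)\in\mathcal{D}_{\varepsilon,\delta}(\phi_k)\text{ for all }\{i,j,k\}=\{1,2,3\}\}.$$
   Context: Generalized hyperbolic triangles (in $\mathbb{H}^2$) are convex regions bounded by three geodesics $L_1,L_2,L_3$ (forming a Euclidean triangle in the Klein model) truncated by common perpendiculars at vertices outside $\overline{\mathbb{H}^2}$, with horodisks at ideal vertices; a generalized vertex has type $1$ (in $\mathbb{H}^2$), $0$ (ideal) or $-1$ (hyperideal). Generalized angle: interior angle (type 1), twice the horocyclic arc length between the sides (type 0), distance between the two sides (type $-1$). Generalized edge length between generalized vertices $u,v$: with $B_u$ the point, the horodisk, or the half-plane beyond the truncating perpendicular, it is $d(B_u,B_v)$ if these are disjoint and minus the distance between the points where $\partial B_u,\partial B_v$ meet the side otherwise. Type $(-1,-1,-1)$ triangles are right-angled hexagons, type $(0,0,0)$ are decorated ideal triangles. $\mathring I_\delta=\mathbb{R}_{>0}$ for $\delta\in\{0,-1\}$, $(0,\pi)$ for $\delta=1$; $J_\sigma=\mathbb{R}_{>0}$ for $\sigma=\pm1$, $J_0=\mathbb{R}$. For $\theta\in\mathring I_\delta$, $\mathcal{D}_{\varepsilon,\delta}(\theta)$ is the set of $(a,b)\in(J_{\varepsilon\delta})^2$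 such that there is a generalized triangle of type $(\varepsilon,\varepsilon,\delta)$ whose two sides at the type-$\delta$ vertex have lengths $a,b$ and whose generalized angle there is $\theta$. For $(r_i,r_j)\in\mathcal{D}_{\varepsilon,\delta}(\phi_k)$ let $l_k$ be the generalized length of the third side of this (unique up to isometry) triangle. Then $\mathcal{M}_{\varepsilon,\delta}(\phi_1,\phi_2,\phi_3)$ is the set of $(r_1,r_2,r_3)\in(J_{\varepsilon\delta})^3$ such that, for each $\{i,j,k\}=\{1,2,3\}$, $l_k$ is defined, and there exists a generalized triangle of type $(\varepsilon,\varepsilon,\varepsilon)$ with edge lengths $l_1,l_2,l_3$. *)

theory Defs
  imports "HOL-Analysis.Analysis"
begin

text \<open>The hyperbolic plane is the upper sheet of the hyperboloid
  lor x x = -1.  The Klein model is the affine chart x3 = 1 (projective points with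
  positive third coordinate); a point p of the Klein plane lifts to the ray through (p,1).\<close>

type_synonym v3 = "real \<times> real \<times> real"

fun lor :: "v3 \<Rightarrow> v3 \<Rightarrow> real" where
  "lor (a, b, c) (d, e, f) = a * d + b * e - c * f"

fun thd :: "v3 \<Rightarrow> real" where
  "thd (a, b, c) = c"

fun det3 :: "v3 \<Rightarrow> v3 \<Rightarrow> v3 \<Rightarrow> real" where
  "det3 (a1, a2, a3) (b1, b2, b3) (c1, c2, c3) =
     a1 * (b2 * c3 - b3 * c2) - a2 * (b1 * c3 - b3 * c1) + a3 * (b1 * c2 - b2 * c1)"

definition hyp :: "v3 set" where
  "hyp = {x. lor x x = -1 \<and> thd x > 0}"

definition hdist :: "v3 \<Rightarrow> v3 \<Rightarrow> real" where
  "hdist x y = arcosh (- lor x y)"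

definition hsetdist :: "v3 set \<Rightarrow> v3 set \<Rightarrow> real" where
  "hsetdist A B = Inf {hdist x y | x y. x \<in> A \<and> y \<in> B}"

definition hline :: "v3 \<Rightarrow> v3 \<Rightarrow> v3 set" where
  "hline U W = {x \<in> hyp. \<exists>a b. x = a *\<^sub>R U + b *\<^sub>R W}"

text \<open>The part of H^2 on the Euclidean segment [U,W] of the Klein model.\<close>
definition hseg :: "v3 \<Rightarrow> v3 \<Rightarrow> v3 set" where
  "hseg U W = {x \<in> hyp. \<exists>a b. a \<ge> 0 \<and> b \<ge> 0 \<and> x = a *\<^sub>R U + b *\<^sub>R W}"

text \<open>A generalized vertex of type t is represented by a vector V with thd V > 0
  (a point of the Klein chart):
  type 1: V is a point of H^2 (lor V V = -1);
  type 0: V is future light-like (lor V V = 0); the ideal point is the ray of V and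
          the scale of V encodes the horodisk {x. - lor x V \<le> 1};
  type -1: V is space-like with lor V V = 1 (a hyperideal point of the Klein chart);
          the truncating perpendicular is its polar line {x. lor x V = 0}, and
          B_V is the half-plane beyond it (on the side of the hyperideal point).\<close>

definition vtx_ok :: "int \<Rightarrow> v3 \<Rightarrow> bool" where
  "vtx_ok t V = (thd V > 0 \<and>
     (if t = 1 then lor V V = -1 else if t = 0 then lor V V = 0 else t = -1 \<and> lor V V = 1))"

definition Bset :: "int \<Rightarrow> v3 \<Rightarrow> v3 set" where
  "Bset t V = (if t = 1 then {V} else if t = 0 then {x \<in> hyp. - lor x V \<le> 1}
               else {x \<in> hyp. lor x V \<ge> 0})"

definition Bbdry :: "int \<Rightarrow> v3 \<Rightarrow> v3 set" where
  "Bbdry t V = (if t = 1 then {V} else if t = 0 then {x \<in> hyp. - lor x V = 1}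
               else {x \<in> hyp. lor x V = 0})"

text \<open>Generalized triangle of type (t1,t2,t3) with generalized vertices V1,V2,V3:
  the vertices form a non-degenerate Euclidean triangle in the Klein model, each side
  of this Euclidean triangle passes through H^2 (so it lies on a geodesic L_i), and the
  truncations B at non-ideal vertices are pairwise disjoint (so that the region bounded
  by the geodesics and the truncating perpendiculars is a genuine generalized
  triangle; horodisks may overlap anything).\<close>
definition gtri :: "int \<Rightarrow> int \<Rightarrow> int \<Rightarrow> v3 \<Rightarrow> v3 \<Rightarrow> v3 \<Rightarrow> bool" where
  "gtri t1 t2 t3 V1 V2 V3 =
     (vtx_ok t1 V1 \<and> vtx_ok t2 V2 \<and> vtx_ok t3 V3 \<and> det3 V1 V2 V3 \<noteq> 0 \<and>
      hseg V1 V2 \<noteq> {} \<and> hseg V2 V3 \<noteq> {} \<and> hseg V1 V3 \<noteq> {} \<and>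
      (t1 \<noteq> 0 \<and> t2 \<noteq> 0 \<longrightarrow> Bset t1 V1 \<inter> Bset t2 V2 = {}) \<and>
      (t2 \<noteq> 0 \<and> t3 \<noteq> 0 \<longrightarrow> Bset t2 V2 \<inter> Bset t3 V3 = {}) \<and>
      (t1 \<noteq> 0 \<and> t3 \<noteq> 0 \<longrightarrow> Bset t1 V1 \<inter> Bset t3 V3 = {}))"

definition glen :: "int \<Rightarrow> v3 \<Rightarrow> int \<Rightarrow> v3 \<Rightarrow> real" where
  "glen t U s W =
     (if Bset t U \<inter> Bset s W = {} then hsetdist (Bset t U) (Bset s W)
      else - hdist (THE x. x \<in> Bbdry t U \<inter> hline U W) (THE y. y \<in> Bbdry s W \<inter> hline U W))"

text \<open>Generalized angle at the vertex (t,V) between the sides towards W1 and W2.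
  type 1: Riemannian angle between the tangent vectors at V of the two sides;
  type 0: twice the horocyclic arc length (on the boundary horocycle of the horodisk)
          between the two sides; the horocyclic arc between two points of a horocycle at
          hyperbolic distance d has length 2 sinh(d/2);
  type -1: the distance between the two sides.\<close>
definition gangle :: "int \<Rightarrow> v3 \<Rightarrow> v3 \<Rightarrow> v3 \<Rightarrow> real" where
  "gangle t V W1 W2 =
     (if t = 1 then
        (let T1 = W1 + lor W1 V *\<^sub>R V; T2 = W2 + lor W2 V *\<^sub>R V
         in arccos (lor T1 T2 / sqrt (lor T1 T1 * lor T2 T2)))
      else if t = 0 then
        (let X1 = (THE x. x \<in> Bbdry 0 V \<inter> hline V W1);
             X2 = (THE x. x \<in> Bbdry 0 V \<inter> hline V W2)
         in 2 * (2 * sinh (hdist X1 X2 / 2)))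
      else hsetdist (hline V W1) (hline V W2))"

definition Iint :: "int \<Rightarrow> real set" where
  "Iint d = (if d = 1 then {0<..<pi} else {0<..})"

definition Jset :: "int \<Rightarrow> real set" where
  "Jset s = (if s = 0 then UNIV else {0<..})"

definition tri_data :: "int \<Rightarrow> int \<Rightarrow> real \<Rightarrow> real \<Rightarrow> real \<Rightarrow> real \<Rightarrow> bool" where
  "tri_data e d th a b l = (\<exists>V1 V2 V3. gtri e e d V1 V2 V3 \<and>
      glen e V1 d V3 = a \<and> glen e V2 d V3 = b \<and> gangle d V3 V1 V2 = th \<and>
      glen e V1 e V2 = l)"

definition Dset :: "int \<Rightarrow> int \<Rightarrow> real \<Rightarrow> (real \<times> real) set" where
  "Dset e d th = {(a, b). a \<in> Jset (e * d) \<and> b \<in> Jset (e * d) \<and>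
      (\<exists>V1 V2 V3. gtri e e d V1 V2 V3 \<and>
         glen e V1 d V3 = a \<and> glen e V2 d V3 = b \<and> gangle d V3 V1 V2 = th)}"

definition third_side :: "int \<Rightarrow> int \<Rightarrow> real \<Rightarrow> real \<Rightarrow> real \<Rightarrow> real \<Rightarrow> bool" where
  "third_side e d th a b l = ((a, b) \<in> Dset e d th \<and> tri_data e d th a b l)"

definition Mset :: "int \<Rightarrow> int \<Rightarrow> real \<Rightarrow> real \<Rightarrow> real \<Rightarrow> (real \<times> real \<times> real) set" where
  "Mset e d p1 p2 p3 = {(r1, r2, r3).
      r1 \<in> Jset (e * d) \<and> r2 \<in> Jset (e * d) \<and> r3 \<in> Jset (e * d) \<and>
      (\<exists>l1 l2 l3.
         third_side e d p1 r2 r3 l1 \<and> third_side e d p1 r3 r2 l1 \<and>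
         third_side e d p2 r1 r3 l2 \<and> third_side e d p2 r3 r1 l2 \<and>
         third_side e d p3 r1 r2 l3 \<and> third_side e d p3 r2 r1 l3 \<and>
         (\<exists>U1 U2 U3. gtri e e e U1 U2 U3 \<and>
            glen e U2 e U3 = l1 \<and> glen e U1 e U3 = l2 \<and> glen e U1 e U2 = l3))}"

end

theory Submission
  imports Defs
begin


lemma lor_sym: "lor x y = lor y x"
  by (cases x rule: prod_cases3; cases y rule: prod_cases3) (simp add: algebra_simps)
lemma lor_add_l: "lor (x + y) z = lor x z + lor y z"
  by (cases x rule: prod_cases3; cases y rule: prod_cases3; cases z rule: prod_cases3) (simp add: algebra_simps)
lemma lor_add_r: "lor z (x + y) = lor z x + lor z y"
  by (cases x rule: prod_cases3; cases y rule: prod_cases3; cases z rule: prod_cases3) (simp add: algebra_simps)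
lemma lor_diff_l: "lor (x - y) z = lor x z - lor y z"
  by (cases x rule: prod_cases3; cases y rule: prod_cases3; cases z rule: prod_cases3) (simp add: algebra_simps)
lemma lor_diff_r: "lor z (x - y) = lor z x - lor z y"
  by (cases x rule: prod_cases3; cases y rule: prod_cases3; cases z rule: prod_cases3) (simp add: algebra_simps)
lemma lor_scale_l: "lor (a *\<^sub>R x) z = a * lor x z"
  by (cases x rule: prod_cases3; cases z rule: prod_cases3) (simp add: algebra_simps)
lemma lor_scale_r: "lor z (a *\<^sub>R x) = a * lor z x"
  by (cases x rule: prod_cases3; cases z rule: prod_cases3) (simp add: algebra_simps)
lemma thd_add: "thd (x + y) = thd x + thd y"
  by (cases x rule: prod_cases3; cases y rule: prod_cases3) simp
lemma thd_scale: "thd (a *\<^sub>R x) = a * thd x"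
  by (cases x rule: prod_cases3) simp
lemmas lor_lin = lor_add_l lor_add_r lor_diff_l lor_diff_r lor_scale_l lor_scale_r

lemma timelike_key:
  fixes a b c d e f :: real
  assumes "c^2 > a^2 + b^2" "f^2 > d^2 + e^2"
  shows "\<bar>a*d + b*e\<bar> < \<bar>c\<bar> * \<bar>f\<bar>"
proof -
  have "(a*d+b*e)^2 \<le> (a^2+b^2)*(d^2+e^2)"
  proof -
    have "(a^2+b^2)*(d^2+e^2) - (a*d+b*e)^2 = (a*e-b*d)^2" by algebra
    then show ?thesis by (metis diff_ge_0_iff_ge zero_le_power2)
  qed
  also have "... < c^2 * f^2"
    using assms by (intro mult_strict_mono') (auto intro: add_nonneg_nonneg)
  finally have "(a*d+b*e)^2 < (\<bar>c\<bar>*\<bar>f\<bar>)^2" by (simp add: power_mult_distrib)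
  then show ?thesis
    by (metis abs_ge_zero abs_mult abs_power2 power2_abs power_less_imp_less_base zero_le_mult_iff)
qed

lemma future_lor_neg:
  assumes "lor y y < 0" "lor z z < 0" "thd y > 0" "thd z > 0"
  shows "lor y z < 0"
proof -
  obtain a b c where y: "y = (a,b,c)" by (cases y rule: prod_cases3)
  obtain d e f where z: "z = (d,e,f)" by (cases z rule: prod_cases3)
  have "c^2 > a^2+b^2" "f^2 > d^2+e^2" using assms y z by (auto simp: power2_eq_square)
  from timelike_key[OF this] have "\<bar>a*d + b*e\<bar> < \<bar>c\<bar> * \<bar>f\<bar>" .
  then show ?thesis using assms y z by (auto simp: abs_if split: if_splits)
qed

lemma future_of_lor_neg:
  assumes "lor y y < 0" "lor z z < 0" "thd z > 0" "lor y z < 0"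
  shows "thd y > 0"
proof -
  obtain a b c where y: "y = (a,b,c)" by (cases y rule: prod_cases3)
  obtain d e f where z: "z = (d,e,f)" by (cases z rule: prod_cases3)
  have h: "c^2 > a^2+b^2" "f^2 > d^2+e^2" using assms y z by (auto simp: power2_eq_square)
  from timelike_key[OF this] have k: "\<bar>a*d + b*e\<bar> < \<bar>c\<bar> * \<bar>f\<bar>" .
  have "a^2+b^2 \<ge> 0" by simp
  then have "c^2 > 0" using h by linarith
  then have "c \<noteq> 0" by auto
  show ?thesis
  proof (rule ccontr)
    assume "\<not> thd y > 0"
    then have "c < 0" using \<open>c\<noteq>0\<close> y by auto
    then show False using k assms y z by (auto simp: abs_if split: if_splits)
  qed
qed

lemma hyp_lor_neg: "x \<in> hyp \<Longrightarrow> z \<in> hyp \<Longrightarrow> lor x z < 0"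
  unfolding hyp_def by (auto intro: future_lor_neg)



lemma cramer:
  assumes "lor r a = 0" "lor r b = 0" "lor r c = 0" "det3 a b c \<noteq> 0"
  shows "r = 0"
proof -
  obtain a1 a2 a3 where a: "a = (a1,a2,a3)" by (cases a rule: prod_cases3)
  obtain b1 b2 b3 where b: "b = (b1,b2,b3)" by (cases b rule: prod_cases3)
  obtain c1 c2 c3 where c: "c = (c1,c2,c3)" by (cases c rule: prod_cases3)
  obtain r1 r2 r3 where r: "r = (r1,r2,r3)" by (cases r rule: prod_cases3)
  let ?d = "det3 a b c"
  have e1: "?d * r1 = lor r a * (b2*c3-b3*c2) + lor r b * (c2*a3-c3*a2) + lor r c * (a2*b3-a3*b2)"
    unfolding a b c r by simp algebra
  have e2: "?d * r2 = lor r a * (b3*c1-b1*c3) + lor r b * (c3*a1-c1*a3) + lor r c * (a3*b1-a1*b3)"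
    unfolding a b c r by simp algebra
  have e3: "?d * (-r3) = lor r a * (b1*c2-b2*c1) + lor r b * (c1*a2-c2*a1) + lor r c * (a1*b2-a2*b1)"
    unfolding a b c r by simp algebra
  show ?thesis using e1 e2 e3 assms r by (simp add: zero_prod_def)
qed

lemma gram_det:
  "(det3 a b c)^2 = - (lor a a * (lor b b * lor c c - lor b c ^2) - lor a b * (lor a b * lor c c - lor b c * lor a c)
       + lor a c * (lor a b * lor b c - lor b b * lor a c))"
proof -
  obtain a1 a2 a3 where a: "a = (a1,a2,a3)" by (cases a rule: prod_cases3)
  obtain b1 b2 b3 where b: "b = (b1,b2,b3)" by (cases b rule: prod_cases3)
  obtain c1 c2 c3 where c: "c = (c1,c2,c3)" by (cases c rule: prod_cases3)
  show ?thesis unfolding a b c by simp algebra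
qed

definition ONF :: "v3 \<Rightarrow> v3 \<Rightarrow> v3 \<Rightarrow> bool" where
  "ONF f0 f1 f2 = (lor f0 f0 = -1 \<and> lor f1 f1 = 1 \<and> lor f2 f2 = 1 \<and> lor f0 f1 = 0 \<and> lor f0 f2 = 0
     \<and> lor f1 f2 = 0 \<and> thd f0 > 0)"

lemma ONF_complete:
  assumes "ONF f0 f1 f2"
  shows "x = lor x f1 *\<^sub>R f1 + lor x f2 *\<^sub>R f2 - lor x f0 *\<^sub>R f0"
proof -
  let ?r = "x - (lor x f1 *\<^sub>R f1 + lor x f2 *\<^sub>R f2 - lor x f0 *\<^sub>R f0)"
  have o: "lor f0 f0 = -1" "lor f1 f1 = 1" "lor f2 f2 = 1" "lor f0 f1 = 0" "lor f0 f2 = 0" "lor f1 f2 = 0"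
    "lor f1 f0 = 0" "lor f2 f0 = 0" "lor f2 f1 = 0"
    using assms unfolding ONF_def by (auto simp: lor_sym)
  have "(det3 f0 f1 f2)^2 = 1" unfolding gram_det using o by simp
  then have "det3 f0 f1 f2 \<noteq> 0" by auto
  moreover have "lor ?r f0 = 0" "lor ?r f1 = 0" "lor ?r f2 = 0"
    by (simp_all add: lor_lin o)
  ultimately have "?r = 0" using cramer by blast
  then show ?thesis by simp
qed



definition isom :: "v3 \<Rightarrow> v3 \<Rightarrow> v3 \<Rightarrow> v3 \<Rightarrow> v3 \<Rightarrow> v3 \<Rightarrow> v3 \<Rightarrow> v3" where
  "isom g0 g1 g2 h0 h1 h2 x = lor x g1 *\<^sub>R h1 + lor x g2 *\<^sub>R h2 - lor x g0 *\<^sub>R h0"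

lemma ONF_o:
  assumes "ONF f0 f1 f2"
  shows "lor f0 f0 = -1" "lor f1 f1 = 1" "lor f2 f2 = 1" "lor f0 f1 = 0" "lor f0 f2 = 0" "lor f1 f2 = 0"
    "lor f1 f0 = 0" "lor f2 f0 = 0" "lor f2 f1 = 0" "thd f0 > 0"
  using assms unfolding ONF_def by (auto simp: lor_sym)

lemma isom_lor:
  assumes g: "ONF g0 g1 g2" and h: "ONF h0 h1 h2"
  shows "lor (isom g0 g1 g2 h0 h1 h2 x) (isom g0 g1 g2 h0 h1 h2 y) = lor x y"
proof -
  have "lor x y = lor (lor x g1 *\<^sub>R g1 + lor x g2 *\<^sub>R g2 - lor x g0 *\<^sub>R g0) y"
    using ONF_complete[OF g, of x] by simp
  also have "... = lor x g1 * lor y g1 + lor x g2 * lor y g2 - lor x g0 * lor y g0"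
    by (simp add: lor_lin lor_sym[of y g0] lor_sym[of y g1] lor_sym[of y g2])
  moreover have "lor (isom g0 g1 g2 h0 h1 h2 x) (isom g0 g1 g2 h0 h1 h2 y) =
      lor x g1 * lor y g1 + lor x g2 * lor y g2 - lor x g0 * lor y g0"
    unfolding isom_def by (simp add: lor_lin ONF_o(1-9)[OF h])
  ultimately show ?thesis by simp
qed

lemma isom_lin:
  "isom g0 g1 g2 h0 h1 h2 (a *\<^sub>R x + b *\<^sub>R y) = a *\<^sub>R isom g0 g1 g2 h0 h1 h2 x + b *\<^sub>R isom g0 g1 g2 h0 h1 h2 y"
  unfolding isom_def by (simp add: lor_lin algebra_simps)

lemma ONF_hyp: "ONF f0 f1 f2 \<Longrightarrow> f0 \<in> hyp"
  unfolding ONF_def hyp_def by auto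

lemma isom_hyp:
  assumes g: "ONF g0 g1 g2" and h: "ONF h0 h1 h2" and x: "x \<in> hyp"
  shows "isom g0 g1 g2 h0 h1 h2 x \<in> hyp"
proof -
  let ?y = "isom g0 g1 g2 h0 h1 h2 x"
  have yy: "lor ?y ?y = -1" using isom_lor[OF g h, of x x] x unfolding hyp_def by simp
  have "lor ?y h0 = lor x g0" unfolding isom_def using ONF_o(1,7,8)[OF h]
    by (simp add: lor_lin)
  moreover have "lor x g0 < 0" using hyp_lor_neg[OF x ONF_hyp[OF g]] .
  ultimately have "lor ?y h0 < 0" by simp
  then have "thd ?y > 0"
    using future_of_lor_neg[of ?y h0] yy ONF_o(1,10)[OF h] by simp
  then show ?thesis using \<open>lor ?y ?y = -1\<close> unfolding hyp_def by simp
qed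

lemma isom_inv:
  assumes g: "ONF g0 g1 g2" and h: "ONF h0 h1 h2"
  shows "isom h0 h1 h2 g0 g1 g2 (isom g0 g1 g2 h0 h1 h2 x) = x"
proof -
  have "isom h0 h1 h2 g0 g1 g2 (isom g0 g1 g2 h0 h1 h2 x) = lor x g1 *\<^sub>R g1 + lor x g2 *\<^sub>R g2 - lor x g0 *\<^sub>R g0"
    unfolding isom_def using ONF_o[OF h] by (simp add: lor_lin)
  then show ?thesis using ONF_complete[OF g] by simp
qed

lemma isom_coords:
  assumes h: "ONF h0 h1 h2" and "lor V g0 = lor U h0" "lor V g1 = lor U h1" "lor V g2 = lor U h2"
  shows "isom g0 g1 g2 h0 h1 h2 V = U"
  unfolding isom_def using assms ONF_complete[OF h, of U] by simp



definition iso2 :: "(v3 \<Rightarrow> v3) \<Rightarrow> (v3 \<Rightarrow> v3) \<Rightarrow> bool" where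
  "iso2 A B = ((\<forall>x y. lor (A x) (A y) = lor x y) \<and> (\<forall>x y. lor (B x) (B y) = lor x y) \<and>
     (\<forall>x\<in>hyp. A x \<in> hyp) \<and> (\<forall>x\<in>hyp. B x \<in> hyp) \<and> (\<forall>x. B (A x) = x) \<and> (\<forall>x. A (B x) = x) \<and>
     (\<forall>a b x y. A (a *\<^sub>R x + b *\<^sub>R y) = a *\<^sub>R A x + b *\<^sub>R A y) \<and>
     (\<forall>a b x y. B (a *\<^sub>R x + b *\<^sub>R y) = a *\<^sub>R B x + b *\<^sub>R B y))"

lemma iso2_sym: "iso2 A B \<Longrightarrow> iso2 B A"
  unfolding iso2_def by auto

lemma iso2_isom:
  assumes g: "ONF g0 g1 g2" and h: "ONF h0 h1 h2"
  shows "iso2 (isom g0 g1 g2 h0 h1 h2) (isom h0 h1 h2 g0 g1 g2)"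
  unfolding iso2_def using isom_lor[OF g h] isom_lor[OF h g] isom_hyp[OF g h] isom_hyp[OF h g]
    isom_inv[OF g h] isom_inv[OF h g] isom_lin by blast

context
  fixes A B
  assumes iso: "iso2 A B"
begin

lemma lA: "lor (A x) (A y) = lor x y" using iso unfolding iso2_def by blast
lemma lB: "lor (B x) (B y) = lor x y" using iso unfolding iso2_def by blast
lemma hA: "x \<in> hyp \<Longrightarrow> A x \<in> hyp" using iso unfolding iso2_def by blast
lemma hB: "x \<in> hyp \<Longrightarrow> B x \<in> hyp" using iso unfolding iso2_def by blast
lemma BA: "B (A x) = x" using iso unfolding iso2_def by blast
lemma AB: "A (B x) = x" using iso unfolding iso2_def by blast
lemma linA: "A (a *\<^sub>R x + b *\<^sub>R y) = a *\<^sub>R A x + b *\<^sub>R A y" using iso unfolding iso2_def by blast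
lemma linB: "B (a *\<^sub>R x + b *\<^sub>R y) = a *\<^sub>R B x + b *\<^sub>R B y" using iso unfolding iso2_def by blast

lemma lB': "lor (B y) x = lor y (A x)"
  by (metis lA AB)

lemma inj_A: "inj A" by (metis BA injI)

lemma img_char:
  assumes "\<And>x. x \<in> S \<Longrightarrow> A x \<in> T" "\<And>y. y \<in> T \<Longrightarrow> B y \<in> S"
  shows "T = A ` S"
proof
  show "A ` S \<subseteq> T" using assms by auto
  show "T \<subseteq> A ` S"
  proof
    fix y assume "y \<in> T" then have "B y \<in> S" by (rule assms(2))
    then show "y \<in> A ` S" by (metis AB image_eqI)
  qed
qed

lemma pred_img: "{x \<in> hyp. P (lor x (A V))} = A ` {x \<in> hyp. P (lor x V)}"
proof (rule img_char)
  fix x assume "x \<in> {x \<in> hyp. P (lor x V)}"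
  then show "A x \<in> {x \<in> hyp. P (lor x (A V))}" using hA lA by simp
next
  fix y assume y: "y \<in> {x \<in> hyp. P (lor x (A V))}"
  have "lor (B y) V = lor y (A V)" by (metis lB BA)
  then show "B y \<in> {x \<in> hyp. P (lor x V)}" using y hB by simp
qed

lemma Bset_img: "Bset t (A V) = A ` Bset t V"
  unfolding Bset_def using pred_img[of "\<lambda>r. - r \<le> 1" V] pred_img[of "\<lambda>r. r \<ge> 0" V] by simp

lemma Bbdry_img: "Bbdry t (A V) = A ` Bbdry t V"
  unfolding Bbdry_def using pred_img[of "\<lambda>r. - r = 1" V] pred_img[of "\<lambda>r. r = 0" V] by simp

lemma hline_img: "hline (A U) (A W) = A ` hline U W"
  unfolding hline_def
proof (rule img_char)
  fix x assume "x \<in> {x \<in> hyp. \<exists>a b. x = a *\<^sub>R U + b *\<^sub>R W}"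
  then obtain a b where "x \<in> hyp" "x = a *\<^sub>R U + b *\<^sub>R W" by blast
  then show "A x \<in> {x \<in> hyp. \<exists>a b. x = a *\<^sub>R A U + b *\<^sub>R A W}" using hA linA by blast
next
  fix y assume "y \<in> {x \<in> hyp. \<exists>a b. x = a *\<^sub>R A U + b *\<^sub>R A W}"
  then obtain a b where y: "y \<in> hyp" "y = a *\<^sub>R A U + b *\<^sub>R A W" by blast
  then have "B y = a *\<^sub>R U + b *\<^sub>R W" by (simp add: linB BA)
  then show "B y \<in> {x \<in> hyp. \<exists>a b. x = a *\<^sub>R U + b *\<^sub>R W}" using hB[OF y(1)] by blast
qed

lemma hseg_img: "hseg (A U) (A W) = A ` hseg U W"
  unfolding hseg_def
proof (rule img_char)
  fix x assume "x \<in> {x \<in> hyp. \<exists>a b. a \<ge> 0 \<and> b \<ge> 0 \<and> x = a *\<^sub>R U + b *\<^sub>R W}"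
  then obtain a b where "x \<in> hyp" "a \<ge> 0" "b \<ge> 0" "x = a *\<^sub>R U + b *\<^sub>R W" by blast
  then show "A x \<in> {x \<in> hyp. \<exists>a b. a \<ge> 0 \<and> b \<ge> 0 \<and> x = a *\<^sub>R A U + b *\<^sub>R A W}" using hA linA by blast
next
  fix y assume "y \<in> {x \<in> hyp. \<exists>a b. a \<ge> 0 \<and> b \<ge> 0 \<and> x = a *\<^sub>R A U + b *\<^sub>R A W}"
  then obtain a b where y: "y \<in> hyp" "a \<ge> 0" "b \<ge> 0" "y = a *\<^sub>R A U + b *\<^sub>R A W" by blast
  then have "B y = a *\<^sub>R U + b *\<^sub>R W" by (simp add: linB BA)
  then show "B y \<in> {x \<in> hyp. \<exists>a b. a \<ge> 0 \<and> b \<ge> 0 \<and> x = a *\<^sub>R U + b *\<^sub>R W}" using hB[OF y(1)] y(2,3) by blast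
qed

lemma hdist_img: "hdist (A x) (A y) = hdist x y"
  unfolding hdist_def by (simp add: lA)

lemma hsetdist_img: "hsetdist (A ` S) (A ` T) = hsetdist S T"
proof -
  have "{hdist x y | x y. x \<in> A ` S \<and> y \<in> A ` T} = {hdist x y | x y. x \<in> S \<and> y \<in> T}"
  proof (intro set_eqI iffI)
    fix z assume "z \<in> {hdist x y | x y. x \<in> A ` S \<and> y \<in> A ` T}"
    then obtain x y where "z = hdist (A x) (A y)" "x \<in> S" "y \<in> T" by blast
    then show "z \<in> {hdist x y | x y. x \<in> S \<and> y \<in> T}" using hdist_img by blast
  next
    fix z assume "z \<in> {hdist x y | x y. x \<in> S \<and> y \<in> T}"
    then obtain x y where "z = hdist x y" "x \<in> S" "y \<in> T" by blast
    then have "z = hdist (A x) (A y)" "A x \<in> A ` S" "A y \<in> A ` T" using hdist_img by auto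
    then show "z \<in> {hdist x y | x y. x \<in> A ` S \<and> y \<in> A ` T}" by blast
  qed
  then show ?thesis unfolding hsetdist_def by simp
qed

lemma the_img: "\<exists>!x. x \<in> S \<Longrightarrow> (THE x. x \<in> A ` S) = A (THE x. x \<in> S)"
proof -
  assume "\<exists>!x. x \<in> S"
  then obtain x0 where "x0 \<in> S" "\<forall>y\<in>S. y = x0" by blast
  then have "S = {x0}" by blast
  then show ?thesis by simp
qed

lemma glen_img:
  assumes "Bset t U \<inter> Bset s W \<noteq> {} \<Longrightarrow>
     (\<exists>!x. x \<in> Bbdry t U \<inter> hline U W) \<and> (\<exists>!y. y \<in> Bbdry s W \<inter> hline U W)"
  shows "glen t (A U) s (A W) = glen t U s W"
proof -
  have i: "A ` X \<inter> A ` Y = A ` (X \<inter> Y)" for X Y using inj_A by (simp add: image_Int)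
  show ?thesis
  proof (cases "Bset t U \<inter> Bset s W = {}")
    case True
    then show ?thesis unfolding glen_def Bset_img i hsetdist_img by simp
  next
    case False
    then show ?thesis using assms unfolding glen_def Bset_img Bbdry_img hline_img i
      by (simp add: the_img hdist_img)
  qed
qed

end



fun lcross :: "v3 \<Rightarrow> v3 \<Rightarrow> v3" where
  "lcross (a1, a2, a3) (b1, b2, b3) = (a2*b3 - a3*b2, a3*b1 - a1*b3, a2*b1 - a1*b2)"

lemma lcross_props:
  "lor (lcross a b) a = 0" "lor (lcross a b) b = 0"
  "lor (lcross a b) (lcross a b) = (lor a b)^2 - lor a a * lor b b"
proof -
  obtain a1 a2 a3 where a: "a = (a1,a2,a3)" by (cases a rule: prod_cases3)
  obtain b1 b2 b3 where b: "b = (b1,b2,b3)" by (cases b rule: prod_cases3)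
  show "lor (lcross a b) a = 0" "lor (lcross a b) b = 0"
    "lor (lcross a b) (lcross a b) = (lor a b)^2 - lor a a * lor b b"
    unfolding a b by (simp; algebra)+
qed

definition pf0 :: "v3 \<Rightarrow> v3 \<Rightarrow> v3" where
  "pf0 V W = (1 / sqrt (- lor (V+W) (V+W))) *\<^sub>R (V+W)"
definition pf1 :: "v3 \<Rightarrow> v3 \<Rightarrow> v3" where
  "pf1 V W = (1 / sqrt (lor (V-W) (V-W))) *\<^sub>R (V-W)"
definition pf2 :: "v3 \<Rightarrow> v3 \<Rightarrow> v3" where
  "pf2 V W = (1 / sqrt (lor (lcross (V+W) (V-W)) (lcross (V+W) (V-W)))) *\<^sub>R lcross (V+W) (V-W)"

context
  fixes V W :: v3 and q c :: real
  assumes VV: "lor V V = q" and WW: "lor W W = q" and VW: "lor V W = c"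
    and qc1: "q + c < 0" and qc2: "q - c > 0" and th: "thd (V+W) > 0"
begin

lemma WV: "lor W V = c" using VW lor_sym by metis

lemma ss: "lor (V+W) (V+W) = 2*q + 2*c" by (simp add: lor_lin VV WW VW WV)
lemma tt: "lor (V-W) (V-W) = 2*q - 2*c" by (simp add: lor_lin VV WW VW WV)
lemma st: "lor (V+W) (V-W) = 0" by (simp add: lor_lin VV WW VW WV)
lemma ts: "lor (V-W) (V+W) = 0" by (simp add: lor_lin VV WW VW WV)
lemma nn: "lor (lcross (V+W) (V-W)) (lcross (V+W) (V-W)) = (2*q+2*c) * (2*q-2*c) * (-1)"
  by (simp add: lcross_props st ss tt)

lemma pf_ONF: "ONF (pf0 V W) (pf1 V W) (pf2 V W)"
proof -
  let ?s = "V+W" and ?t = "V-W" and ?n = "lcross (V+W) (V-W)"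
  have sp: "- lor ?s ?s > 0" using ss qc1 by simp
  have tp: "lor ?t ?t > 0" using tt qc2 by simp
  have np: "lor ?n ?n > 0" using nn qc1 qc2 by (simp add: mult_neg_pos)
  have ns: "lor ?n ?s = 0" "lor ?n ?t = 0" "lor ?s ?n = 0" "lor ?t ?n = 0"
    using lcross_props lor_sym by metis+
  have sq: "\<And>r::real. r > 0 \<Longrightarrow> (1 / sqrt r) * (1 / sqrt r) = 1 / r"
    by (simp add: real_sqrt_mult[symmetric])
  show ?thesis unfolding ONF_def pf0_def pf1_def pf2_def
    using sp tp np sq[OF sp] sq[OF tp] sq[OF np] th
    by (simp add: lor_scale_l lor_scale_r st ns thd_scale)
qed

lemma coordV: "lor V (pf0 V W) = (q+c) / sqrt (-(2*q+2*c))"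
  "lor V (pf1 V W) = (q-c) / sqrt (2*q-2*c)" "lor V (pf2 V W) = 0"
proof -
  have n: "lor V (lcross (V+W) (V-W)) = 0"
  proof -
    have "V = (1/2) *\<^sub>R (V+W) + (1/2) *\<^sub>R (V-W)"
      by (simp add: scaleR_add_right scaleR_diff_right flip: scaleR_add_left)
    then have "lor V (lcross (V+W) (V-W)) = (1/2) * lor (V+W) (lcross (V+W) (V-W)) + (1/2) * lor (V-W) (lcross (V+W) (V-W))"
      by (metis lor_add_l lor_scale_l)
    then show ?thesis using lor_sym[of "V+W" "lcross (V+W) (V-W)"] lor_sym[of "V-W" "lcross (V+W) (V-W)"]
      lcross_props(1,2)[of "V+W" "V-W"] by simp
  qed
  show "lor V (pf0 V W) = (q+c) / sqrt (-(2*q+2*c))" unfolding pf0_def ss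
    by (simp add: lor_lin VV VW)
  show "lor V (pf1 V W) = (q-c) / sqrt (2*q-2*c)" unfolding pf1_def tt
    by (simp add: lor_lin VV VW)
  show "lor V (pf2 V W) = 0" unfolding pf2_def by (simp add: lor_scale_r n)
qed

lemma coordW: "lor W (pf0 V W) = (q+c) / sqrt (-(2*q+2*c))"
  "lor W (pf1 V W) = (c-q) / sqrt (2*q-2*c)" "lor W (pf2 V W) = 0"
proof -
  have n: "lor W (lcross (V+W) (V-W)) = 0"
  proof -
    have "W = (1/2) *\<^sub>R (V+W) + (-1/2) *\<^sub>R (V-W)"
      by (simp add: scaleR_add_right scaleR_diff_right flip: scaleR_add_left)
    then have "lor W (lcross (V+W) (V-W)) = (1/2) * lor (V+W) (lcross (V+W) (V-W)) + (-1/2) * lor (V-W) (lcross (V+W) (V-W))"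
      by (metis lor_add_l lor_scale_l)
    then show ?thesis using lor_sym[of "V+W" "lcross (V+W) (V-W)"] lor_sym[of "V-W" "lcross (V+W) (V-W)"]
      lcross_props(1,2)[of "V+W" "V-W"] by simp
  qed
  show "lor W (pf0 V W) = (q+c) / sqrt (-(2*q+2*c))" unfolding pf0_def ss
    by (simp add: lor_lin WW WV add.commute)
  show "lor W (pf1 V W) = (c-q) / sqrt (2*q-2*c)" unfolding pf1_def tt
    by (simp add: lor_lin WW WV)
  show "lor W (pf2 V W) = 0" unfolding pf2_def by (simp add: lor_scale_r n)
qed

end

definition pmap :: "v3 \<Rightarrow> v3 \<Rightarrow> v3 \<Rightarrow> v3 \<Rightarrow> v3 \<Rightarrow> v3" where
  "pmap V W U X = isom (pf0 V W) (pf1 V W) (pf2 V W) (pf0 U X) (pf1 U X) (pf2 U X)"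

definition pair_ok :: "real \<Rightarrow> real \<Rightarrow> v3 \<Rightarrow> v3 \<Rightarrow> bool" where
  "pair_ok q c V W = (lor V V = q \<and> lor W W = q \<and> lor V W = c \<and> q + c < 0 \<and> q - c > 0 \<and> thd (V+W) > 0)"

lemma pmap_iso:
  assumes "pair_ok q c V W" "pair_ok q c U X"
  shows "iso2 (pmap V W U X) (pmap U X V W)" "pmap V W U X V = U" "pmap V W U X W = X"
proof -
  have g: "ONF (pf0 V W) (pf1 V W) (pf2 V W)" using pf_ONF assms(1) unfolding pair_ok_def by blast
  have h: "ONF (pf0 U X) (pf1 U X) (pf2 U X)" using pf_ONF assms(2) unfolding pair_ok_def by blast
  show "iso2 (pmap V W U X) (pmap U X V W)" unfolding pmap_def by (rule iso2_isom[OF g h])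
  show "pmap V W U X V = U" unfolding pmap_def
    by (rule isom_coords[OF h]) (use coordV assms in \<open>auto simp: pair_ok_def\<close>)
  show "pmap V W U X W = X" unfolding pmap_def
    by (rule isom_coords[OF h]) (use coordW assms in \<open>auto simp: pair_ok_def\<close>)
qed



lemma thd_diff: "thd (x - y) = thd x - thd y"
  by (cases x rule: prod_cases3; cases y rule: prod_cases3) simp

lemma hline_sym: "hline U W = hline W U"
  unfolding hline_def by (rule Collect_cong) (metis add.commute)

lemma lor_comb: "lor (a *\<^sub>R V + b *\<^sub>R W) (a *\<^sub>R V + b *\<^sub>R W) = a^2 * lor V V + b^2 * lor W W + 2*a*b * lor V W"
  by (simp add: lor_lin lor_sym[of W V] power2_eq_square algebra_simps)

lemma hseg_pair:
  assumes VV: "lor V V = q" and WW: "lor W W = q" and q: "q \<ge> 0" and ne: "hseg V W \<noteq> {}"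
  shows "pair_ok q (lor V W) V W"
proof -
  let ?c = "lor V W"
  obtain x a b where x: "x \<in> hyp" "a \<ge> 0" "b \<ge> 0" "x = a *\<^sub>R V + b *\<^sub>R W"
    using ne unfolding hseg_def by blast
  have e: "a^2 * q + b^2 * q + 2*a*b*?c = -1" using x lor_comb[of a V b W] VV WW unfolding hyp_def by simp
  have qc: "q + ?c < 0"
  proof (rule ccontr)
    assume "\<not> q + ?c < 0"
    then have "?c \<ge> -q" by simp
    then have "2*a*b*?c \<ge> 2*a*b*(-q)" using x(2,3) by (intro mult_left_mono) auto
    moreover have "a^2*q + b^2*q - 2*a*b*q = q * (a-b)^2" by (simp add: power2_eq_square algebra_simps)
    moreover have "q * (a-b)^2 \<ge> 0" using q by simp
    ultimately show False using e by linarith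
  qed
  have ab: "a + b > 0"
  proof (rule ccontr)
    assume "\<not> a + b > 0" then have "a = 0" "b = 0" using x by auto
    then show False using e by simp
  qed
  have "lor x (V+W) = (a+b)*(q+?c)" using x(4) VV WW
    by (simp add: lor_lin lor_sym[of W V] algebra_simps)
  also have "... < 0" using ab qc by (simp add: mult_pos_neg)
  finally have xn: "lor x (V+W) < 0" .
  have ss: "lor (V+W) (V+W) < 0" using qc VV WW by (simp add: lor_lin lor_sym[of W V])
  have "thd (V+W) > 0"
    using future_of_lor_neg[of "V+W" x] ss x(1) xn lor_sym[of x "V+W"] unfolding hyp_def by simp
  then show ?thesis unfolding pair_ok_def using VV WW qc q by simp
qed

lemma pair_hseg:
  assumes VV: "lor V V = q" and WW: "lor W W = q" and qc: "q + lor V W < 0" and q: "q \<ge> 0"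
    and tV: "thd V > 0" and tW: "thd W > 0"
  shows "hseg V W \<noteq> {}" "pair_ok q (lor V W) V W"
proof -
  let ?c = "lor V W"
  define a where "a = 1 / sqrt (-(2*q + 2*?c))"
  have ap: "a > 0" using qc unfolding a_def by simp
  have "a^2 = 1 / (-(2*q+2*?c))" unfolding a_def using qc by (simp add: power_divide)
  then have "lor (a *\<^sub>R V + a *\<^sub>R W) (a *\<^sub>R V + a *\<^sub>R W) = -1"
    unfolding lor_comb VV WW using qc by (simp add: field_simps power2_eq_square)
  moreover have "thd (a *\<^sub>R V + a *\<^sub>R W) > 0" using ap tV tW by (simp add: thd_add thd_scale add_pos_pos)
  moreover have "\<exists>aa b. aa \<ge> 0 \<and> b \<ge> 0 \<and> a *\<^sub>R V + a *\<^sub>R W = aa *\<^sub>R V + b *\<^sub>R W"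
    using ap by (intro exI[of _ a]) auto
  ultimately have "a *\<^sub>R V + a *\<^sub>R W \<in> hseg V W" unfolding hseg_def hyp_def by blast
  then show "hseg V W \<noteq> {}" by blast
  show "pair_ok q (lor V W) V W" unfolding pair_ok_def using assms by (simp add: thd_add)
qed

lemma horo_unique:
  assumes UU: "lor U U = 0" and WW: "lor W W = 0" and c: "lor U W < 0" and tU: "thd U > 0" and tW: "thd W > 0"
  shows "\<exists>!x. x \<in> Bbdry 0 U \<inter> hline U W"
proof -
  let ?c = "lor U W"
  have WU: "lor W U = ?c" by (rule lor_sym)
  let ?x = "(1/2) *\<^sub>R U + (-1/?c) *\<^sub>R W"
  have "lor ?x ?x = -1" unfolding lor_comb UU WW using c by (simp add: field_simps)
  moreover have "thd ?x > 0"
  proof -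
    have "-1/?c > 0" using c by simp
    then have "(-1/?c) * thd W > 0" using tW by (rule mult_pos_pos)
    then show ?thesis using tU by (simp only: thd_add thd_scale)
  qed
  moreover have "- lor ?x U = 1" using c by (simp add: lor_lin UU WU)
  moreover have "\<exists>a b. ?x = a *\<^sub>R U + b *\<^sub>R W" by blast
  ultimately have xin: "?x \<in> Bbdry 0 U \<inter> hline U W" unfolding Bbdry_def hline_def hyp_def
    by (simp only: Int_iff mem_Collect_eq if_True if_False) simp
  show ?thesis
  proof (rule ex1I[of _ ?x])
    show "?x \<in> Bbdry 0 U \<inter> hline U W" by (rule xin)
    fix y assume "y \<in> Bbdry 0 U \<inter> hline U W"
    then obtain a b where y: "y \<in> hyp" "- lor y U = 1" "y = a *\<^sub>R U + b *\<^sub>R W"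
      unfolding Bbdry_def hline_def by auto
    have "- (b * ?c) = 1" using y(2,3) by (simp add: lor_lin UU WU)
    then have b: "b = -1/?c" using c by (simp add: field_simps)
    have "2*a*b*?c = -1" using y(1,3) unfolding hyp_def by (simp add: lor_comb UU WW)
    then have "a = 1/2" using b c by (simp add: field_simps)
    then show "y = ?x" using y(3) b by simp
  qed
qed

lemma horo_unique2:
  assumes UU: "lor U U = 0" and WW: "lor W W = 0" and c: "lor U W < 0" and tU: "thd U > 0" and tW: "thd W > 0"
  shows "\<exists>!x. x \<in> Bbdry 0 W \<inter> hline U W"
proof -
  have "hline U W = hline W U" by (rule hline_sym)
  moreover have "lor W U < 0" using c lor_sym by metis
  ultimately show ?thesis using horo_unique[OF WW UU _ tW tU] by simp
qed



lemma hdist_sym: "hdist x y = hdist y x" unfolding hdist_def by (simp add: lor_sym)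

lemma hsetdist_sym: "hsetdist S T = hsetdist T S"
proof -
  have "{hdist x y | x y. x \<in> S \<and> y \<in> T} = {hdist x y | x y. x \<in> T \<and> y \<in> S}"
    using hdist_sym by blast
  then show ?thesis unfolding hsetdist_def by simp
qed

lemma glen_sym: "glen t U s W = glen s W t U"
proof -
  have i: "Bset s W \<inter> Bset t U = Bset t U \<inter> Bset s W" by blast
  have h: "hline W U = hline U W" by (rule hline_sym)
  show ?thesis
    by (simp only: glen_def i h hsetdist_sym[of "Bset s W"]
      hdist_sym[of "THE x. x \<in> Bbdry s W \<inter> hline U W"])
qed

lemma gangle_sym: "gangle t V W1 W2 = gangle t V W2 W1"
proof -
  have a: "lor (W1 + lor W1 V *\<^sub>R V) (W2 + lor W2 V *\<^sub>R V) = lor (W2 + lor W2 V *\<^sub>R V) (W1 + lor W1 V *\<^sub>R V)"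
    by (rule lor_sym)
  show ?thesis unfolding gangle_def Let_def
    by (simp only: a mult.commute[of "lor (W1 + lor W1 V *\<^sub>R V) (W1 + lor W1 V *\<^sub>R V)"]
      hdist_sym[of "THE x. x \<in> Bbdry 0 V \<inter> hline V W1"] hsetdist_sym[of "hline V W1"])
qed

lemma hseg_sym: "hseg U W = hseg W U"
  unfolding hseg_def by (rule Collect_cong) (metis add.commute)

lemma det3_swap: "det3 V2 V1 V3 = - det3 V1 V2 V3"
  by (cases V1 rule: prod_cases3; cases V2 rule: prod_cases3; cases V3 rule: prod_cases3) (simp add: algebra_simps)

lemma gtri_swap: "gtri e e d V1 V2 V3 \<Longrightarrow> gtri e e d V2 V1 V3"
proof -
  assume g: "gtri e e d V1 V2 V3"
  have p: "vtx_ok e V1" "vtx_ok e V2" "vtx_ok d V3" "det3 V1 V2 V3 \<noteq> 0"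
    "hseg V1 V2 \<noteq> {}" "hseg V2 V3 \<noteq> {}" "hseg V1 V3 \<noteq> {}"
    "e \<noteq> 0 \<and> e \<noteq> 0 \<longrightarrow> Bset e V1 \<inter> Bset e V2 = {}"
    "e \<noteq> 0 \<and> d \<noteq> 0 \<longrightarrow> Bset e V2 \<inter> Bset d V3 = {}"
    "e \<noteq> 0 \<and> d \<noteq> 0 \<longrightarrow> Bset e V1 \<inter> Bset d V3 = {}"
    using g unfolding gtri_def by blast+
  have "det3 V2 V1 V3 \<noteq> 0" using p(4) det3_swap[of V2 V1 V3] by simp
  moreover have "hseg V2 V1 \<noteq> {}" using p(5) hseg_sym[of V2 V1] by simp
  moreover have "Bset e V2 \<inter> Bset e V1 = Bset e V1 \<inter> Bset e V2" by blast
  ultimately show ?thesis unfolding gtri_def using p by simp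
qed

definition qv :: "int \<Rightarrow> real" where "qv e = (if e = 0 then 0 else 1)"

lemma vtx_ok_iff: "e \<in> {0, -1} \<Longrightarrow> vtx_ok e V \<longleftrightarrow> thd V > 0 \<and> lor V V = qv e"
  unfolding vtx_ok_def qv_def by auto

lemma side_data:
  assumes e: "e \<in> {0, -1}" and ab: "(a, b) \<in> Dset e d th" and ba: "(b, a) \<in> Dset e d th"
  shows "\<exists>V W l. third_side e d th a b l \<and> third_side e d th b a l \<and> l = glen e V e W \<and>
     pair_ok (qv e) (lor V W) V W \<and> thd V > 0 \<and> thd W > 0 \<and> (e \<noteq> 0 \<longrightarrow> Bset e V \<inter> Bset e W = {})"
proof -
  obtain V1 V2 V3 where t: "gtri e e d V1 V2 V3" "glen e V1 d V3 = a" "glen e V2 d V3 = b"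
    "gangle d V3 V1 V2 = th"
    using ab unfolding Dset_def by blast
  let ?l = "glen e V1 e V2"
  have "tri_data e d th a b ?l" unfolding tri_data_def using t by blast
  moreover have "tri_data e d th b a ?l" unfolding tri_data_def
    using gtri_swap[OF t(1)] t(2,3,4) gangle_sym glen_sym[of e V1 e V2] by metis
  ultimately have ts: "third_side e d th a b ?l" "third_side e d th b a ?l"
    unfolding third_side_def using ab ba by auto
  have v: "thd V1 > 0" "lor V1 V1 = qv e" "thd V2 > 0" "lor V2 V2 = qv e" "hseg V1 V2 \<noteq> {}"
    "e \<noteq> 0 \<longrightarrow> Bset e V1 \<inter> Bset e V2 = {}"
    using t(1) vtx_ok_iff[OF e] unfolding gtri_def by auto
  have "qv e \<ge> 0" unfolding qv_def by simp
  then have "pair_ok (qv e) (lor V1 V2) V1 V2" using hseg_pair v by blast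
  then show ?thesis using ts v by blast
qed

lemma transfer:
  assumes e: "e \<in> {0, -1}" and pV: "pair_ok (qv e) c V W" and pU: "pair_ok (qv e) c U X"
    and tV: "thd V > 0" "thd W > 0" and dj: "e \<noteq> 0 \<longrightarrow> Bset e V \<inter> Bset e W = {}"
  shows "glen e U e X = glen e V e W" "e \<noteq> 0 \<longrightarrow> Bset e U \<inter> Bset e X = {}"
proof -
  let ?A = "pmap V W U X" and ?B = "pmap U X V W"
  have iso: "iso2 ?A ?B" and AV: "?A V = U" and AW: "?A W = X" using pmap_iso[OF pV pU] by auto
  have "glen e (?A V) e (?A W) = glen e V e W"
  proof (rule glen_img[OF iso])
    assume ne: "Bset e V \<inter> Bset e W \<noteq> {}"
    then have "e = 0" using dj by blast
    then have q: "lor V V = 0" "lor W W = 0" "lor V W < 0" using pV unfolding pair_ok_def qv_def by auto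
    show "(\<exists>!x. x \<in> Bbdry e V \<inter> hline V W) \<and> (\<exists>!y. y \<in> Bbdry e W \<inter> hline V W)"
      using horo_unique[OF q tV] horo_unique2[OF q tV] \<open>e = 0\<close> by simp
  qed
  then show "glen e U e X = glen e V e W" using AV AW by simp
  show "e \<noteq> 0 \<longrightarrow> Bset e U \<inter> Bset e X = {}"
  proof
    assume "e \<noteq> 0"
    then have "Bset e V \<inter> Bset e W = {}" using dj by blast
    then have "?A ` Bset e V \<inter> ?A ` Bset e W = {}"
      by (metis image_Int[OF inj_A[OF iso]] image_empty)
    then show "Bset e U \<inter> Bset e X = {}" using Bset_img[OF iso, of e V] Bset_img[OF iso, of e W] AV AW by simp
  qed
qed



lemma construct0:
  fixes c1 c2 c3 :: real
  assumes "c1 < 0" "c2 < 0" "c3 < 0"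
  shows "\<exists>U1 U2 U3. thd U1 > 0 \<and> thd U2 > 0 \<and> thd U3 > 0 \<and> lor U1 U1 = 0 \<and> lor U2 U2 = 0 \<and> lor U3 U3 = 0
    \<and> lor U2 U3 = c1 \<and> lor U1 U3 = c2 \<and> lor U1 U2 = c3 \<and> det3 U1 U2 U3 \<noteq> 0"
proof -
  define m1 m2 m3 where "m1 = -c1" "m2 = -c2" "m3 = -c3/2"
  have mp: "m1 > 0" "m2 > 0" "m3 > 0" using assms unfolding m1_m2_m3_def by auto
  define l1 where "l1 = sqrt (m2*m3/m1)"
  have l1p: "l1 > 0" using mp unfolding l1_def by simp
  have l1s: "l1 * l1 = m2*m3/m1" unfolding l1_def using mp by simp
  define l2 l3 where "l2 = m3 / l1" "l3 = m2 / l1"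
  have l23: "l2 > 0" "l3 > 0" using mp l1p unfolding l2_l3_def by auto
  have e1: "l2 * l3 = m1" unfolding l2_l3_def using l1s mp l1p by (simp add: field_simps)
  have e2: "l1 * l3 = m2" "l1 * l2 = m3" unfolding l2_l3_def using l1p by auto
  let ?U1 = "(l1, 0::real, l1)" and ?U2 = "(-l2, 0::real, l2)" and ?U3 = "(0::real, l3, l3)"
  have "lor ?U2 ?U3 = c1" using e1 unfolding m1_m2_m3_def by simp
  moreover have "lor ?U1 ?U3 = c2" using e2 unfolding m1_m2_m3_def by simp
  moreover have "lor ?U1 ?U2 = c3" using e2 unfolding m1_m2_m3_def by (simp add: mult.commute)
  moreover have "det3 ?U1 ?U2 ?U3 \<noteq> 0" using l1p l23 by simp
  ultimately show ?thesis using l1p l23 by (intro exI[of _ ?U1] exI[of _ ?U2] exI[of _ ?U3]) simp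
qed

lemma construct1:
  fixes c1 c2 c3 :: real
  assumes c1: "c1 < -1" and c2: "c2 < -1" and c3: "c3 < -1"
  shows "\<exists>U1 U2 U3. thd U1 > 0 \<and> thd U2 > 0 \<and> thd U3 > 0 \<and> lor U1 U1 = 1 \<and> lor U2 U2 = 1 \<and> lor U3 U3 = 1
    \<and> lor U2 U3 = c1 \<and> lor U1 U3 = c2 \<and> lor U1 U2 = c3 \<and> det3 U1 U2 U3 \<noteq> 0"
proof -
  define C S where "C = sqrt ((1-c3)/2)" "S = sqrt ((-1-c3)/2)"
  have Cp: "C > 0" "S > 0" using c3 unfolding C_S_def by auto
  have CC: "C*C = (1-c3)/2" "S*S = (-1-c3)/2" using c3 unfolding C_S_def by auto
  define z x where "z = -(c1+c2)/(2*S)" "x = (c2-c1)/(2*C)"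
  have zp: "z > 0" using Cp c1 c2 unfolding z_x_def by (simp add: divide_pos_pos)
  have zx: "z^2 \<ge> x^2"
  proof -
    have "(c1-c2)^2 \<le> (c1+c2)^2"
    proof -
      have "(c1+c2)^2 - (c1-c2)^2 = 4*(c1*c2)" by (simp add: power2_eq_square algebra_simps)
      moreover have "c1*c2 > 0" using c1 c2 by (simp add: mult_neg_neg)
      ultimately show ?thesis by linarith
    qed
    have SC: "S*S \<le> C*C" using CC by simp
    have "x^2 = (c1-c2)^2 / (4*(C*C))" unfolding z_x_def by (simp add: power2_eq_square algebra_simps)
    also have "... \<le> (c1-c2)^2 / (4*(S*S))"
      using SC Cp by (intro divide_left_mono) (auto intro: mult_pos_pos)
    also have "... \<le> (c1+c2)^2 / (4*(S*S))"
      using \<open>(c1-c2)^2 \<le> (c1+c2)^2\<close> Cp by (intro divide_right_mono) auto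
    also have "... = z^2" unfolding z_x_def by (simp add: power2_eq_square algebra_simps)
    finally show ?thesis .
  qed
  define y where "y = sqrt (1 + z^2 - x^2)"
  have yp: "y > 0" using zx unfolding y_def by simp
  have yy: "y*y = 1 + z^2 - x^2" using zx unfolding y_def by simp
  let ?U1 = "(C, 0::real, S)" and ?U2 = "(-C, 0::real, S)" and ?U3 = "(x, y, z)"
  have "lor ?U1 ?U1 = 1" using CC by simp
  moreover have "lor ?U2 ?U2 = 1" using CC by simp
  moreover have "lor ?U3 ?U3 = 1" using yy by (simp add: power2_eq_square)
  moreover have "lor ?U1 ?U2 = c3" using CC by simp
  moreover have "C * x = (c2-c1)/2" "S * z = -(c1+c2)/2" unfolding z_x_def using Cp by auto
  then have "lor ?U1 ?U3 = c2" "lor ?U2 ?U3 = c1" by (simp_all add: field_simps)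
  moreover have "det3 ?U1 ?U2 ?U3 \<noteq> 0" using Cp yp by simp
  ultimately show ?thesis using Cp zp by (intro exI[of _ ?U1] exI[of _ ?U2] exI[of _ ?U3]) simp
qed

lemma construct:
  assumes e: "e \<in> {0, -1}" and c: "qv e + c1 < 0" "qv e + c2 < 0" "qv e + c3 < 0"
  shows "\<exists>U1 U2 U3. thd U1 > 0 \<and> thd U2 > 0 \<and> thd U3 > 0 \<and> lor U1 U1 = qv e \<and> lor U2 U2 = qv e \<and> lor U3 U3 = qv e
    \<and> lor U2 U3 = c1 \<and> lor U1 U3 = c2 \<and> lor U1 U2 = c3 \<and> det3 U1 U2 U3 \<noteq> 0"
proof (cases "e = 0")
  case True then show ?thesis using construct0[of c1 c2 c3] c unfolding qv_def by simp
next
  case False then show ?thesis using construct1[of c1 c2 c3] c unfolding qv_def by simp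
qed



theorem lemma4p1:
  fixes e d :: int and p1 p2 p3 :: real
  assumes "e \<in> {0, -1}" and "d \<in> {-1, 0, 1}"
    and "p1 \<in> Iint d" and "p2 \<in> Iint d" and "p3 \<in> Iint d"
  shows "Mset e d p1 p2 p3 = {(r1, r2, r3).
           r1 \<in> Jset (e * d) \<and> r2 \<in> Jset (e * d) \<and> r3 \<in> Jset (e * d) \<and>
           (r2, r3) \<in> Dset e d p1 \<and> (r3, r2) \<in> Dset e d p1 \<and>
           (r1, r3) \<in> Dset e d p2 \<and> (r3, r1) \<in> Dset e d p2 \<and>
           (r1, r2) \<in> Dset e d p3 \<and> (r2, r1) \<in> Dset e d p3}"
proof (intro set_eqI iffI)
  fix r assume "r \<in> Mset e d p1 p2 p3"
  then obtain r1 r2 r3 where r: "r = (r1, r2, r3)" "r1 \<in> Jset (e * d)" "r2 \<in> Jset (e * d)" "r3 \<in> Jset (e * d)"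
    and "\<exists>l1 l2 l3.
         third_side e d p1 r2 r3 l1 \<and> third_side e d p1 r3 r2 l1 \<and>
         third_side e d p2 r1 r3 l2 \<and> third_side e d p2 r3 r1 l2 \<and>
         third_side e d p3 r1 r2 l3 \<and> third_side e d p3 r2 r1 l3"
    unfolding Mset_def by blast
  then show "r \<in> {(r1, r2, r3).
           r1 \<in> Jset (e * d) \<and> r2 \<in> Jset (e * d) \<and> r3 \<in> Jset (e * d) \<and>
           (r2, r3) \<in> Dset e d p1 \<and> (r3, r2) \<in> Dset e d p1 \<and>
           (r1, r3) \<in> Dset e d p2 \<and> (r3, r1) \<in> Dset e d p2 \<and>
           (r1, r2) \<in> Dset e d p3 \<and> (r2, r1) \<in> Dset e d p3}"
    unfolding third_side_def by blast
next
  have e: "e \<in> {0, -1}" by (rule assms(1))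
  fix r assume "r \<in> {(r1, r2, r3).
           r1 \<in> Jset (e * d) \<and> r2 \<in> Jset (e * d) \<and> r3 \<in> Jset (e * d) \<and>
           (r2, r3) \<in> Dset e d p1 \<and> (r3, r2) \<in> Dset e d p1 \<and>
           (r1, r3) \<in> Dset e d p2 \<and> (r3, r1) \<in> Dset e d p2 \<and>
           (r1, r2) \<in> Dset e d p3 \<and> (r2, r1) \<in> Dset e d p3}"
  then obtain r1 r2 r3 where r: "r = (r1, r2, r3)" "r1 \<in> Jset (e * d)" "r2 \<in> Jset (e * d)" "r3 \<in> Jset (e * d)"
    and D: "(r2, r3) \<in> Dset e d p1" "(r3, r2) \<in> Dset e d p1"
           "(r1, r3) \<in> Dset e d p2" "(r3, r1) \<in> Dset e d p2"
           "(r1, r2) \<in> Dset e d p3" "(r2, r1) \<in> Dset e d p3"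
    by blast
  obtain V1 V2 l1 where s1: "third_side e d p1 r2 r3 l1" "third_side e d p1 r3 r2 l1" "l1 = glen e V1 e V2"
     "pair_ok (qv e) (lor V1 V2) V1 V2" "thd V1 > 0" "thd V2 > 0" "e \<noteq> 0 \<longrightarrow> Bset e V1 \<inter> Bset e V2 = {}"
    using side_data[OF e D(1,2)] by blast
  obtain W1 W2 l2 where s2: "third_side e d p2 r1 r3 l2" "third_side e d p2 r3 r1 l2" "l2 = glen e W1 e W2"
     "pair_ok (qv e) (lor W1 W2) W1 W2" "thd W1 > 0" "thd W2 > 0" "e \<noteq> 0 \<longrightarrow> Bset e W1 \<inter> Bset e W2 = {}"
    using side_data[OF e D(3,4)] by blast
  obtain X1 X2 l3 where s3: "third_side e d p3 r1 r2 l3" "third_side e d p3 r2 r1 l3" "l3 = glen e X1 e X2"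
     "pair_ok (qv e) (lor X1 X2) X1 X2" "thd X1 > 0" "thd X2 > 0" "e \<noteq> 0 \<longrightarrow> Bset e X1 \<inter> Bset e X2 = {}"
    using side_data[OF e D(5,6)] by blast
  have c: "qv e + lor V1 V2 < 0" "qv e + lor W1 W2 < 0" "qv e + lor X1 X2 < 0"
    using s1(4) s2(4) s3(4) unfolding pair_ok_def by auto
  obtain U1 U2 U3 where U: "thd U1 > 0" "thd U2 > 0" "thd U3 > 0" "lor U1 U1 = qv e" "lor U2 U2 = qv e"
    "lor U3 U3 = qv e" "lor U2 U3 = lor V1 V2" "lor U1 U3 = lor W1 W2" "lor U1 U2 = lor X1 X2"
    "det3 U1 U2 U3 \<noteq> 0"
    using construct[OF e c] by blast
  have q0: "qv e \<ge> 0" unfolding qv_def by simp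
  have h23: "hseg U2 U3 \<noteq> {}" "pair_ok (qv e) (lor V1 V2) U2 U3"
    using pair_hseg[OF U(5,6) _ q0 U(2,3)] c U(7) by auto
  have h13: "hseg U1 U3 \<noteq> {}" "pair_ok (qv e) (lor W1 W2) U1 U3"
    using pair_hseg[OF U(4,6) _ q0 U(1,3)] c U(8) by auto
  have h12: "hseg U1 U2 \<noteq> {}" "pair_ok (qv e) (lor X1 X2) U1 U2"
    using pair_hseg[OF U(4,5) _ q0 U(1,2)] c U(9) by auto
  note t1 = transfer[OF e s1(4) h23(2) s1(5,6,7)]
  note t2 = transfer[OF e s2(4) h13(2) s2(5,6,7)]
  note t3 = transfer[OF e s3(4) h12(2) s3(5,6,7)]
  have "gtri e e e U1 U2 U3" unfolding gtri_def
    using vtx_ok_iff[OF e] U h23(1) h13(1) h12(1) t1(2) t2(2) t3(2) by auto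
  moreover have "glen e U2 e U3 = l1" "glen e U1 e U3 = l2" "glen e U1 e U2 = l3"
    using t1(1) t2(1) t3(1) s1(3) s2(3) s3(3) by auto
  ultimately show "r \<in> Mset e d p1 p2 p3" unfolding Mset_def
    using r s1(1,2) s2(1,2) s3(1,2) by blast
qed

end
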